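(* Let $G$ be a countable multiplicatively written Abelian group with identity $e$, let $\phi$ be a height on $G$, fix $\alpha\in G$, and let $I\subseteq(0,\infty)$ be an open interval (possibly unbounded) such that for every $t\in I$ the infimum in the definition of $\phi_t(\alpha)$ is attained. Then the following conditions are equivalent: (i) There exists a finite set $\mathcal X\subseteq\mathbb R^\infty$ such that $\phi_t(\alpha)=\min\{\|\mathbf x\|_t:\mathbf x\in\mathcal X\}$ for all $t\in I$. (ii) $I$ contains only finitely many exceptional points. (iii) There exists a finite set $R\subseteq G$ (containing $e$) that replaces $G$ uniformly on $I$. (iv) There exists a set $S\subseteq G$ (containing $e$) with $\phi(S)$ finite that replaces $G$ uniformly on $I$.
   Context: A height on an Abelian group $G$ is a map $\phi:G\to[0,\infty)$ with $\phi(e)=0$ and $\phi(\beta)=\phi(\beta^{-1})$ for all $\beta\in G$. For $S\subseteq G$ containing $e$, $S^\infty$ is the set of sequences $(\alpha_1,\alpha_2,\ldots)$ with all $\alpha_n\in S$ and $\alpha_n=e$ for all but finitely many $n$; $\tau_G(\alpha_1,\alpha_2,\ldots)=\prod_n\alpha_n$. $\mathbb R^\infty$ is the set of real sequences with finitely many nonzero entries, with $\|\mathbf x\|_t=(\sum_n|x_n|^t)^{1/t}$ for $t\in(0,\infty)$. The $t$-metric version of $\phi$ is $\phi_t(\alpha)=\inf\{\|(\phi(\alpha_1),\phi(\alpha_2),\ldots)\|_t:(\alpha_1,\alpha_2,\ldots)\in G^\infty,\ \tau_G(\alpha_1,\alpha_2,\ldots)=\alpha\}$; "the infimum is attained" means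 some such sequence achieves it. A set $S\ni e$ replaces $G$ at $t$ if $\phi_t(\alpha)$ equals the same infimum taken only over sequences in $S^\infty$ with product $\alpha$; $S$ replaces $G$ uniformly on $I$ if it replaces $G$ at every $t\in I$. A subset $K\subseteq I$ is uniform if there exists $\mathbf x\in\mathbb R^\infty$ with $\phi_t(\alpha)=\|\mathbf x\|_t$ for all $t\in K$. A point $t\in I$ is standard if there is a uniform open interval $J\subseteq I$ containing $t$, and exceptional otherwise. *)

theory Defs
  imports "HOL-Analysis.Analysis" "HOL-Library.Countable"
begin

text \<open>The Abelian group G is rendered as a type of class ab_group_add (written
additively: identity 0, inverse uminus, product = sum). Countability is the
type class countable.\<close>

definition height :: "('a::ab_group_add \<Rightarrow> real) \<Rightarrow> bool" where
  "height \<phi> \<longleftrightarrow> (\<forall>b. \<phi> b \<ge> 0) \<and> \<phi> 0 = 0 \<and> (\<forall>b. \<phi> b = \<phi> (- b))"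

definition fin_seqs :: "'a::zero set \<Rightarrow> (nat \<Rightarrow> 'a) set" where
  "fin_seqs S = {a. (\<forall>n. a n \<in> S) \<and> finite {n. a n \<noteq> 0}}"

definition tauG :: "(nat \<Rightarrow> 'a::comm_monoid_add) \<Rightarrow> 'a" where
  "tauG a = (\<Sum>n\<in>{n. a n \<noteq> 0}. a n)"

definition realinf :: "(nat \<Rightarrow> real) set" where
  "realinf = {x. finite {n. x n \<noteq> 0}}"

definition tnorm :: "real \<Rightarrow> (nat \<Rightarrow> real) \<Rightarrow> real" where
  "tnorm t x = (\<Sum>n\<in>{n. x n \<noteq> 0}. \<bar>x n\<bar> powr t) powr (1 / t)"

definition phi_t :: "('a::ab_group_add \<Rightarrow> real) \<Rightarrow> real \<Rightarrow> 'a \<Rightarrow> real" where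
  "phi_t \<phi> t \<alpha> = Inf {tnorm t (\<phi> \<circ> a) | a. a \<in> fin_seqs UNIV \<and> tauG a = \<alpha>}"

definition attained :: "('a::ab_group_add \<Rightarrow> real) \<Rightarrow> real \<Rightarrow> 'a \<Rightarrow> bool" where
  "attained \<phi> t \<alpha> \<longleftrightarrow>
     (\<exists>a \<in> fin_seqs UNIV. tauG a = \<alpha> \<and> tnorm t (\<phi> \<circ> a) = phi_t \<phi> t \<alpha>)"

text \<open>S replaces G at t (for the fixed element alpha). An empty infimum is +infinity,
so we require some representation of alpha over S.\<close>
definition replaces_at :: "('a::ab_group_add \<Rightarrow> real) \<Rightarrow> 'a \<Rightarrow> 'a set \<Rightarrow> real \<Rightarrow> bool" where
  "replaces_at \<phi> \<alpha> S t \<longleftrightarrow> 0 \<in> S \<and>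
     (\<exists>a \<in> fin_seqs S. tauG a = \<alpha>) \<and>
     phi_t \<phi> t \<alpha> = Inf {tnorm t (\<phi> \<circ> a) | a. a \<in> fin_seqs S \<and> tauG a = \<alpha>}"

definition replaces_unif :: "('a::ab_group_add \<Rightarrow> real) \<Rightarrow> 'a \<Rightarrow> 'a set \<Rightarrow> real set \<Rightarrow> bool" where
  "replaces_unif \<phi> \<alpha> S I \<longleftrightarrow> (\<forall>t\<in>I. replaces_at \<phi> \<alpha> S t)"

definition uniform_set :: "('a::ab_group_add \<Rightarrow> real) \<Rightarrow> 'a \<Rightarrow> real set \<Rightarrow> bool" where
  "uniform_set \<phi> \<alpha> K \<longleftrightarrow> (\<exists>x\<in>realinf. \<forall>t\<in>K. phi_t \<phi> t \<alpha> = tnorm t x)"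

definition standard_pt :: "('a::ab_group_add \<Rightarrow> real) \<Rightarrow> 'a \<Rightarrow> real set \<Rightarrow> real \<Rightarrow> bool" where
  "standard_pt \<phi> \<alpha> I t \<longleftrightarrow> t \<in> I \<and>
     (\<exists>a b. t \<in> {a<..<b} \<and> {a<..<b} \<subseteq> I \<and> uniform_set \<phi> \<alpha> {a<..<b})"

definition exceptional_pt :: "('a::ab_group_add \<Rightarrow> real) \<Rightarrow> 'a \<Rightarrow> real set \<Rightarrow> real \<Rightarrow> bool" where
  "exceptional_pt \<phi> \<alpha> I t \<longleftrightarrow> t \<in> I \<and> \<not> standard_pt \<phi> \<alpha> I t"

end

theory Submission
  imports Defs
begin


lemma rolle_finite:
  fixes h h' :: "real \<Rightarrow> real"
  assumes der: "\<And>x. (h has_real_derivative h' x) (at x)"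
    and fin: "finite {x. h' x = 0}"
  shows "finite {x. h x = 0}"
proof -
  define Z' where "Z' = {x. h' x = 0}"
  define k where "k z = card {w\<in>Z'. w < z}" for z
  have inj: "inj_on k {x. h x = 0}"
  proof (rule linorder_inj_onI')
    fix a b assume ab: "a \<in> {x. h x = 0}" "b \<in> {x. h x = 0}" "a < b"
    show "k a \<noteq> k b"
    proof
      assume eq: "k a = k b"
      have sub: "{w\<in>Z'. w < a} \<subseteq> {w\<in>Z'. w < b}" using ab(3) by auto
      have finb: "finite {w\<in>Z'. w < b}" using fin unfolding Z'_def by simp
      have seq: "{w\<in>Z'. w < a} = {w\<in>Z'. w < b}"
      proof (rule card_subset_eq[OF finb sub])
        show "card {w\<in>Z'. w < a} = card {w\<in>Z'. w < b}" using eq unfolding k_def .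
      qed
      have cont: "continuous_on {a..b} h"
        by (meson DERIV_isCont continuous_at_imp_continuous_on der)
      have dif: "\<And>x. a < x \<Longrightarrow> x < b \<Longrightarrow> h differentiable at x"
        using der unfolding real_differentiable_def by blast
      have hab: "h a = h b" using ab(1,2) by simp
      obtain z where z: "a < z" "z < b" "DERIV h z :> 0"
        using Rolle[OF ab(3) hab cont dif] by blast
      have "h' z = 0" using DERIV_unique[OF der[of z] z(3)] .
      then have "z \<in> {w\<in>Z'. w < b}" using z unfolding Z'_def by simp
      then have "z \<in> {w\<in>Z'. w < a}" using seq by simp
      then show False using z(1) by simp
    qed
  qed
  have "k ` {x. h x = 0} \<subseteq> {0..card Z'}"
  proof
    fix y assume "y \<in> k ` {x. h x = 0}"
    then obtain z where "y = k z" by blast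
    moreover have "card {w\<in>Z'. w < z} \<le> card Z'"
      using fin unfolding Z'_def by (intro card_mono) auto
    ultimately show "y \<in> {0..card Z'}" unfolding k_def by simp
  qed
  then have "finite (k ` {x. h x = 0})" using finite_subset by blast
  then show ?thesis using finite_imageD inj by blast
qed

lemma expsum_aux:
  "\<forall>(L::'b set) c e. finite L \<longrightarrow> card L = n \<longrightarrow> inj_on e L \<longrightarrow>
     infinite {t::real. (\<Sum>i\<in>L. c i * exp (e i * t)) = 0} \<longrightarrow> (\<forall>i\<in>L. c i = (0::real))"
proof (induction n)
  case 0
  then show ?case by auto
next
  case (Suc n)
  show ?case
  proof (intro allI impI)
    fix L :: "'b set" and c e :: "'b \<Rightarrow> real"
    assume fin: "finite L" and cardL: "card L = Suc n" and inj: "inj_on e L"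
      and inf: "infinite {t::real. (\<Sum>i\<in>L. c i * exp (e i * t)) = 0}"
    obtain \<mu> where mu: "\<mu> \<in> L" using cardL by fastforce
    define L' where "L' = L - {\<mu>}"
    have finL': "finite L'" using fin unfolding L'_def by simp
    have cardL': "card L' = n" using cardL mu fin unfolding L'_def by simp
    have injL': "inj_on (\<lambda>i. e i - e \<mu>) L'"
      using inj unfolding L'_def inj_on_def by auto
    define g where "g t = (\<Sum>i\<in>L. c i * exp (e i * t))" for t
    define h where "h t = c \<mu> + (\<Sum>i\<in>L'. c i * exp ((e i - e \<mu>) * t))" for t
    define h' where "h' t = (\<Sum>i\<in>L'. (c i * (e i - e \<mu>)) * exp ((e i - e \<mu>) * t))" for t
    have gsplit: "g t = c \<mu> * exp (e \<mu> * t) + (\<Sum>i\<in>L'. c i * exp (e i * t))" for t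
      unfolding g_def L'_def using sum.remove[OF fin mu] by simp
    have hg: "h t = exp (- (e \<mu> * t)) * g t" for t
    proof -
      have "exp (- (e \<mu> * t)) * g t = c \<mu> + (\<Sum>i\<in>L'. c i * (exp (- (e \<mu> * t)) * exp (e i * t)))"
        unfolding gsplit by (simp add: distrib_left sum_distrib_left exp_minus field_simps)
      also have "\<dots> = h t" unfolding h_def
        by (simp add: exp_add[symmetric] algebra_simps)
      finally show ?thesis by simp
    qed
    have zeq: "{t. g t = 0} = {t. h t = 0}" using hg by simp
    have der: "(h has_real_derivative h' x) (at x)" for x
      unfolding h_def h'_def
      by (auto intro!: derivative_eq_intros simp: algebra_simps)
    show "\<forall>i\<in>L. c i = 0"
    proof (cases "finite {t. h' t = 0}")
      case True
      then have "finite {t. h t = 0}" using rolle_finite der by blast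
      then have False using inf zeq unfolding g_def by simp
      then show ?thesis ..
    next
      case False
      then have "infinite {t::real. (\<Sum>i\<in>L'. (c i * (e i - e \<mu>)) * exp ((e i - e \<mu>) * t)) = 0}"
        unfolding h'_def by simp
      then have c0: "\<forall>i\<in>L'. c i * (e i - e \<mu>) = 0"
        using Suc.IH[rule_format, of L' "\<lambda>i. e i - e \<mu>" "\<lambda>i. c i * (e i - e \<mu>)", OF finL' cardL' injL'] by simp
      have cL': "\<forall>i\<in>L'. c i = 0"
      proof
        fix i assume i: "i \<in> L'"
        then have "e i \<noteq> e \<mu>" using inj mu unfolding L'_def inj_on_def by auto
        then show "c i = 0" using c0 i by auto
      qed
      have "g t = c \<mu> * exp (e \<mu> * t)" for t using gsplit cL' by simp
      moreover obtain t where "g t = 0" using inf unfolding g_def by (metis (mono_tags) empty_Collect_eq finite.emptyI)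
      ultimately have "c \<mu> = 0" by simp
      then show ?thesis using cL' unfolding L'_def by auto
    qed
  qed
qed

lemma expsum_zero:
  fixes L :: "'b set" and c e :: "'b \<Rightarrow> real"
  assumes "finite L" "inj_on e L" "infinite {t::real. (\<Sum>i\<in>L. c i * exp (e i * t)) = 0}"
  shows "\<forall>i\<in>L. c i = 0"
  using expsum_aux assms by blast

lemma sum_repr:
  fixes x :: "nat \<Rightarrow> real"
  assumes xin: "x \<in> realinf" and finL: "finite L" and sub: "(\<lambda>n. \<bar>x n\<bar>) ` {n. x n \<noteq> 0} \<subseteq> L"
  shows "(\<Sum>n\<in>{n. x n \<noteq> 0}. \<bar>x n\<bar> powr t)
       = (\<Sum>v\<in>L. real (card {n. x n \<noteq> 0 \<and> \<bar>x n\<bar> = v}) * exp (ln v * t))"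
proof -
  define N where "N = {n. x n \<noteq> 0}"
  have finN: "finite N" using xin unfolding realinf_def N_def by simp
  have "(\<Sum>n\<in>N. \<bar>x n\<bar> powr t)
      = (\<Sum>v\<in>(\<lambda>n. \<bar>x n\<bar>) ` N. \<Sum>n\<in>{n. n \<in> N \<and> \<bar>x n\<bar> = v}. \<bar>x n\<bar> powr t)"
    by (rule sum.image_gen[OF finN])
  also have "\<dots> = (\<Sum>v\<in>(\<lambda>n. \<bar>x n\<bar>) ` N. real (card {n. x n \<noteq> 0 \<and> \<bar>x n\<bar> = v}) * exp (ln v * t))"
  proof (rule sum.cong[OF refl])
    fix v assume v: "v \<in> (\<lambda>n. \<bar>x n\<bar>) ` N"
    then have vpos: "v > 0" unfolding N_def by auto
    have "(\<Sum>n\<in>{n. n \<in> N \<and> \<bar>x n\<bar> = v}. \<bar>x n\<bar> powr t) = (\<Sum>n\<in>{n. n \<in> N \<and> \<bar>x n\<bar> = v}. v powr t)"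
      by (rule sum.cong) auto
    also have "\<dots> = real (card {n. n \<in> N \<and> \<bar>x n\<bar> = v}) * v powr t" by simp
    also have "v powr t = exp (ln v * t)" using vpos by (simp add: powr_def mult.commute)
    finally show "(\<Sum>n\<in>{n. n \<in> N \<and> \<bar>x n\<bar> = v}. \<bar>x n\<bar> powr t) = real (card {n. x n \<noteq> 0 \<and> \<bar>x n\<bar> = v}) * exp (ln v * t)"
      unfolding N_def by simp
  qed
  also have "\<dots> = (\<Sum>v\<in>L. real (card {n. x n \<noteq> 0 \<and> \<bar>x n\<bar> = v}) * exp (ln v * t))"
  proof (rule sum.mono_neutral_left[OF finL])
    show "(\<lambda>n. \<bar>x n\<bar>) ` N \<subseteq> L" using sub unfolding N_def .
    show "\<forall>i\<in>L - (\<lambda>n. \<bar>x n\<bar>) ` N. real (card {n. x n \<noteq> 0 \<and> \<bar>x n\<bar> = i}) * exp (ln i * t) = 0"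
    proof
      fix v assume "v \<in> L - (\<lambda>n. \<bar>x n\<bar>) ` N"
      then have "{n. x n \<noteq> 0 \<and> \<bar>x n\<bar> = v} = {}" unfolding N_def by auto
      then show "real (card {n. x n \<noteq> 0 \<and> \<bar>x n\<bar> = v}) * exp (ln v * t) = 0"
        by (metis card.empty mult_zero_left of_nat_0)
    qed
  qed
  finally show ?thesis unfolding N_def .
qed

lemma tnorm_eq_iff:
  assumes "t > 0"
  shows "tnorm t x = tnorm t y \<longleftrightarrow>
    (\<Sum>n\<in>{n. x n \<noteq> 0}. \<bar>x n\<bar> powr t) = (\<Sum>n\<in>{n. y n \<noteq> 0}. \<bar>y n\<bar> powr t)"
proof
  define a where "a = (\<Sum>n\<in>{n. x n \<noteq> 0}. \<bar>x n\<bar> powr t)"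
  define b where "b = (\<Sum>n\<in>{n. y n \<noteq> 0}. \<bar>y n\<bar> powr t)"
  have a0: "a \<ge> 0" unfolding a_def by (intro sum_nonneg) simp
  have b0: "b \<ge> 0" unfolding b_def by (intro sum_nonneg) simp
  assume "tnorm t x = tnorm t y"
  then have "a powr (1/t) = b powr (1/t)" unfolding tnorm_def a_def b_def .
  then have "(a powr (1/t)) powr t = (b powr (1/t)) powr t" by simp
  then show "a = b" using a0 b0 assms by (simp add: powr_powr)
qed (simp add: tnorm_def)

lemma tnorm_ident:
  assumes xin: "x \<in> realinf" and yin: "y \<in> realinf"
    and inf: "infinite {t. t > 0 \<and> tnorm t x = tnorm t y}"
  shows "\<forall>t>0. tnorm t x = tnorm t y"
proof -
  define L where "L = (\<lambda>n. \<bar>x n\<bar>) ` {n. x n \<noteq> 0} \<union> (\<lambda>n. \<bar>y n\<bar>) ` {n. y n \<noteq> 0}"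
  have finL: "finite L" using xin yin unfolding L_def realinf_def by simp
  have Lpos: "\<forall>v\<in>L. v > 0" unfolding L_def by auto
  have inj: "inj_on ln L" using Lpos by (intro inj_onI) (metis ln_inj_iff)
  define c where "c v = real (card {n. x n \<noteq> 0 \<and> \<bar>x n\<bar> = v}) - real (card {n. y n \<noteq> 0 \<and> \<bar>y n\<bar> = v})" for v
  have diff: "(\<Sum>n\<in>{n. x n \<noteq> 0}. \<bar>x n\<bar> powr t) - (\<Sum>n\<in>{n. y n \<noteq> 0}. \<bar>y n\<bar> powr t)
       = (\<Sum>v\<in>L. c v * exp (ln v * t))" for t
    unfolding c_def
    using sum_repr[OF xin finL, of t] sum_repr[OF yin finL, of t]
    unfolding L_def by (simp add: sum_subtractf left_diff_distrib)
  have "{t. t > 0 \<and> tnorm t x = tnorm t y} \<subseteq> {t. (\<Sum>v\<in>L. c v * exp (ln v * t)) = 0}"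
  proof
    fix t assume "t \<in> {t. t > 0 \<and> tnorm t x = tnorm t y}"
    then have "t > 0" "tnorm t x = tnorm t y" by auto
    then have "(\<Sum>n\<in>{n. x n \<noteq> 0}. \<bar>x n\<bar> powr t) = (\<Sum>n\<in>{n. y n \<noteq> 0}. \<bar>y n\<bar> powr t)"
      using tnorm_eq_iff by blast
    then have "(\<Sum>v\<in>L. c v * exp (ln v * t)) = 0" using diff[of t] by simp
    then show "t \<in> {t. (\<Sum>v\<in>L. c v * exp (ln v * t)) = 0}" by simp
  qed
  then have "infinite {t. (\<Sum>v\<in>L. c v * exp (ln v * t)) = 0}" using inf finite_subset by blast
  then have c0: "\<forall>v\<in>L. c v = 0" using expsum_zero[OF finL inj] by blast
  show ?thesis
  proof (intro allI impI)
    fix t :: real assume "t > 0"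
    have "(\<Sum>v\<in>L. c v * exp (ln v * t)) = 0" using c0 by simp
    then show "tnorm t x = tnorm t y" using diff[of t] tnorm_eq_iff[OF \<open>t > 0\<close>] by simp
  qed
qed

lemma tnorm_cont:
  assumes xin: "x \<in> realinf" and t: "t > 0"
  shows "isCont (\<lambda>s. tnorm s x) t"
proof (cases "{n. x n \<noteq> 0} = {}")
  case True
  then show ?thesis unfolding tnorm_def by simp
next
  case False
  have fin: "finite {n. x n \<noteq> 0}" using xin unfolding realinf_def by simp
  have pos: "(\<Sum>n\<in>{n. x n \<noteq> 0}. \<bar>x n\<bar> powr t) > 0"
    using False fin by (intro sum_pos) auto
  show ?thesis unfolding tnorm_def
    using pos t by (auto intro!: continuous_intros)
qed

lemma dickson_aux:
  "\<forall>(V::'v set) (M::('v \<Rightarrow> nat) set). finite V \<longrightarrow> card V = n \<longrightarrow>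
     (\<exists>B\<subseteq>M. finite B \<and> (\<forall>m\<in>M. \<exists>b\<in>B. \<forall>v\<in>V. b v \<le> m v))"
proof (induction n rule: less_induct)
  case (less n)
  show ?case
  proof (intro allI impI)
    fix V :: "'v set" and M :: "('v \<Rightarrow> nat) set"
    assume finV: "finite V" and cV: "card V = n"
    show "\<exists>B\<subseteq>M. finite B \<and> (\<forall>m\<in>M. \<exists>b\<in>B. \<forall>v\<in>V. b v \<le> m v)"
    proof (cases "M = {}")
      case True
      then show ?thesis by auto
    next
      case False
      then obtain m0 where m0: "m0 \<in> M" by blast
      define P where "P u j B \<longleftrightarrow> B \<subseteq> {m\<in>M. m u = j} \<and> finite B \<and>
          (\<forall>m\<in>{m\<in>M. m u = j}. \<exists>b\<in>B. \<forall>v\<in>V - {u}. b v \<le> m v)" for u j B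
      have ex: "\<forall>p. \<exists>B. fst p \<in> V \<longrightarrow> P (fst p) (snd p) B"
      proof
        fix p :: "'v \<times> nat"
        show "\<exists>B. fst p \<in> V \<longrightarrow> P (fst p) (snd p) B"
        proof (cases "fst p \<in> V")
          case True
          have fin': "finite (V - {fst p})" using finV by simp
          have c': "card (V - {fst p}) < n" using card_Diff1_less[OF finV True] cV by simp
          have "\<exists>B\<subseteq>{m\<in>M. m (fst p) = snd p}. finite B \<and>
              (\<forall>m\<in>{m\<in>M. m (fst p) = snd p}. \<exists>b\<in>B. \<forall>v\<in>V - {fst p}. b v \<le> m v)"
            using less.IH[OF c', rule_format, OF fin' refl] .
          then show ?thesis unfolding P_def by blast
        qed simp
      qed
      obtain F where F: "\<forall>p. fst p \<in> V \<longrightarrow> P (fst p) (snd p) (F p)"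
        using choice[OF ex] by blast
      define B where "B = insert m0 (\<Union>u\<in>V. \<Union>j\<in>{..<m0 u}. F (u, j))"
      have "B \<subseteq> M"
      proof -
        have "F (u, j) \<subseteq> M" if "u \<in> V" for u j
          using F[rule_format, of "(u, j)"] that unfolding P_def by auto
        then show ?thesis unfolding B_def using m0 by blast
      qed
      moreover have "finite B"
      proof -
        have "finite (F (u, j))" if "u \<in> V" for u j
          using F[rule_format, of "(u, j)"] that unfolding P_def by auto
        then show ?thesis unfolding B_def using finV by auto
      qed
      moreover have "\<forall>m\<in>M. \<exists>b\<in>B. \<forall>v\<in>V. b v \<le> m v"
      proof
        fix m assume m: "m \<in> M"
        show "\<exists>b\<in>B. \<forall>v\<in>V. b v \<le> m v"
        proof (cases "\<forall>v\<in>V. m0 v \<le> m v")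
          case True
          then show ?thesis unfolding B_def by blast
        next
          case False
          then obtain u where u: "u \<in> V" "m u < m0 u" by (auto simp: not_le)
          have Pu: "P u (m u) (F (u, m u))" using F[rule_format, of "(u, m u)"] u by simp
          then obtain b where b: "b \<in> F (u, m u)" "\<forall>v\<in>V - {u}. b v \<le> m v"
            using m unfolding P_def by blast
          have "b u = m u" using Pu b(1) unfolding P_def by blast
          have "\<forall>v\<in>V. b v \<le> m v"
          proof
            fix v assume "v \<in> V"
            show "b v \<le> m v"
            proof (cases "v = u")
              case True then show ?thesis using \<open>b u = m u\<close> by simp
            next
              case False then show ?thesis using b(2) \<open>v \<in> V\<close> by simp
            qed
          qed
          moreover have "b \<in> B" unfolding B_def using u b(1) by blast
          ultimately show ?thesis by (rule_tac x=b in bexI)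
        qed
      qed
      ultimately show ?thesis by (rule_tac x=B in exI) simp
    qed
  qed
qed

lemma dickson:
  fixes V :: "'v set" and A :: "'c set" and \<mu> :: "'c \<Rightarrow> 'v \<Rightarrow> nat"
  assumes "finite V"
  shows "\<exists>B\<subseteq>A. finite B \<and> (\<forall>a\<in>A. \<exists>b\<in>B. \<forall>v\<in>V. \<mu> b v \<le> \<mu> a v)"
proof -
  obtain B0 where B0: "B0 \<subseteq> \<mu> ` A" "finite B0" "\<forall>m\<in>\<mu> ` A. \<exists>b\<in>B0. \<forall>v\<in>V. b v \<le> m v"
    using dickson_aux[rule_format, OF assms refl, of "\<mu> ` A"] by blast
  have "\<forall>b\<in>B0. \<exists>a\<in>A. \<mu> a = b" using B0(1) by blast
  then obtain g where g: "\<forall>b\<in>B0. g b \<in> A \<and> \<mu> (g b) = b" by metis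
  show ?thesis
  proof (intro exI conjI)
    show "g ` B0 \<subseteq> A" using g by blast
    show "finite (g ` B0)" using B0(2) by simp
    show "\<forall>a\<in>A. \<exists>b\<in>g ` B0. \<forall>v\<in>V. \<mu> b v \<le> \<mu> a v"
    proof
      fix a assume "a \<in> A"
      then obtain b where "b \<in> B0" "\<forall>v\<in>V. b v \<le> \<mu> a v" using B0(3) by blast
      then show "\<exists>b\<in>g ` B0. \<forall>v\<in>V. \<mu> b v \<le> \<mu> a v" using g by (metis image_eqI)
    qed
  qed
qed



lemma tnorm_nonneg: "tnorm t x \<ge> 0"
  unfolding tnorm_def by simp

lemma comp_realinf:
  assumes "height \<phi>" "a \<in> fin_seqs S"
  shows "\<phi> \<circ> a \<in> realinf"
proof -
  have "{n. (\<phi> \<circ> a) n \<noteq> 0} \<subseteq> {n. a n \<noteq> 0}" using assms(1) unfolding height_def by auto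
  moreover have "finite {n. a n \<noteq> 0}" using assms(2) unfolding fin_seqs_def by simp
  ultimately show ?thesis unfolding realinf_def using finite_subset by auto
qed

lemma fin_seqs_mono: "S \<subseteq> T \<Longrightarrow> fin_seqs S \<subseteq> fin_seqs T"
  unfolding fin_seqs_def by auto

lemma bdd_below_tn: "bdd_below {tnorm t (\<phi> \<circ> a) | a. P a}"
  by (rule bdd_belowI[of _ 0]) (auto simp: tnorm_nonneg)

lemma phi_t_le:
  assumes "a \<in> fin_seqs UNIV" "tauG a = \<alpha>"
  shows "phi_t \<phi> t \<alpha> \<le> tnorm t (\<phi> \<circ> a)"
  unfolding phi_t_def
  by (rule cInf_lower) (use assms bdd_below_tn in auto)

lemma replaces_atI:
  assumes "0 \<in> R" "a \<in> fin_seqs R" "tauG a = \<alpha>" "tnorm t (\<phi> \<circ> a) = phi_t \<phi> t \<alpha>"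
  shows "replaces_at \<phi> \<alpha> R t"
proof -
  let ?A = "{tnorm t (\<phi> \<circ> a) | a. a \<in> fin_seqs R \<and> tauG a = \<alpha>}"
  have ne: "?A \<noteq> {}" using assms by auto
  have mem: "tnorm t (\<phi> \<circ> a) \<in> ?A" using assms(2,3) by blast
  have "Inf ?A \<le> phi_t \<phi> t \<alpha>"
    using cInf_lower[OF mem bdd_below_tn] assms(4) by simp
  moreover have "phi_t \<phi> t \<alpha> \<le> Inf ?A"
  proof (rule cInf_greatest[OF ne])
    fix y assume "y \<in> ?A"
    then obtain b where "b \<in> fin_seqs R" "tauG b = \<alpha>" "y = tnorm t (\<phi> \<circ> b)" by blast
    then show "phi_t \<phi> t \<alpha> \<le> y" using phi_t_le fin_seqs_mono[of R UNIV] by blast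
  qed
  ultimately have eq: "phi_t \<phi> t \<alpha> = Inf ?A" by linarith
  have ex: "\<exists>a \<in> fin_seqs R. tauG a = \<alpha>" using assms(2,3) by blast
  show ?thesis unfolding replaces_at_def using assms(1) ex eq by simp
qed

definition mult_of :: "('a::ab_group_add \<Rightarrow> real) \<Rightarrow> (nat \<Rightarrow> 'a) \<Rightarrow> real \<Rightarrow> nat" where
  "mult_of \<phi> a v = card {n. (\<phi> \<circ> a) n \<noteq> 0 \<and> \<bar>(\<phi> \<circ> a) n\<bar> = v}"

lemma tnorm_mono_mult:
  assumes h: "height \<phi>" and finV: "finite (\<phi> ` S)" and t: "t > 0"
    and a: "a \<in> fin_seqs S" and b: "b \<in> fin_seqs S"
    and le: "\<forall>v\<in>\<phi> ` S. mult_of \<phi> b v \<le> mult_of \<phi> a v"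
  shows "tnorm t (\<phi> \<circ> b) \<le> tnorm t (\<phi> \<circ> a)"
proof -
  have nn: "\<phi> z \<ge> 0" for z using h unfolding height_def by simp
  have subA: "(\<lambda>n. \<bar>(\<phi> \<circ> c) n\<bar>) ` {n. (\<phi> \<circ> c) n \<noteq> 0} \<subseteq> \<phi> ` S" if "c \<in> fin_seqs S" for c
  proof
    fix v assume "v \<in> (\<lambda>n. \<bar>(\<phi> \<circ> c) n\<bar>) ` {n. (\<phi> \<circ> c) n \<noteq> 0}"
    then obtain n where "v = \<bar>\<phi> (c n)\<bar>" by auto
    then have "v = \<phi> (c n)" using nn by simp
    moreover have "c n \<in> S" using that unfolding fin_seqs_def by simp
    ultimately show "v \<in> \<phi> ` S" by simp
  qed
  have ra: "(\<Sum>n\<in>{n. (\<phi> \<circ> a) n \<noteq> 0}. \<bar>(\<phi> \<circ> a) n\<bar> powr t)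
      = (\<Sum>v\<in>\<phi> ` S. real (mult_of \<phi> a v) * exp (ln v * t))"
    unfolding mult_of_def by (rule sum_repr[OF comp_realinf[OF h a] finV subA[OF a]])
  have rb: "(\<Sum>n\<in>{n. (\<phi> \<circ> b) n \<noteq> 0}. \<bar>(\<phi> \<circ> b) n\<bar> powr t)
      = (\<Sum>v\<in>\<phi> ` S. real (mult_of \<phi> b v) * exp (ln v * t))"
    unfolding mult_of_def by (rule sum_repr[OF comp_realinf[OF h b] finV subA[OF b]])
  have "(\<Sum>v\<in>\<phi> ` S. real (mult_of \<phi> b v) * exp (ln v * t)) \<le> (\<Sum>v\<in>\<phi> ` S. real (mult_of \<phi> a v) * exp (ln v * t))"
    using le by (intro sum_mono mult_right_mono) auto
  then have "(\<Sum>n\<in>{n. (\<phi> \<circ> b) n \<noteq> 0}. \<bar>(\<phi> \<circ> b) n\<bar> powr t) \<le> (\<Sum>n\<in>{n. (\<phi> \<circ> a) n \<noteq> 0}. \<bar>(\<phi> \<circ> a) n\<bar> powr t)"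
    using ra rb by simp
  then show ?thesis unfolding tnorm_def using t by (intro powr_mono2) (auto intro: sum_nonneg)
qed

lemma iv_to_i:
  assumes h: "height \<phi>" and Ipos: "I \<subseteq> {0<..}" and finS: "finite (\<phi> ` S)"
    and rep: "replaces_unif \<phi> \<alpha> S I"
  shows "\<exists>X. finite X \<and> X \<noteq> {} \<and> X \<subseteq> realinf \<and> (\<forall>t\<in>I. phi_t \<phi> t \<alpha> = Min (tnorm t ` X))"
proof (cases "I = {}")
  case True
  have "(\<lambda>n. 0::real) \<in> realinf" unfolding realinf_def by simp
  then show ?thesis using True by (intro exI[of _ "{\<lambda>n. 0}"]) auto
next
  case False
  then obtain t0 where t0: "t0 \<in> I" by blast
  define A where "A = {a \<in> fin_seqs S. tauG a = \<alpha>}"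
  have Ane: "A \<noteq> {}" using rep t0 unfolding replaces_unif_def replaces_at_def A_def by blast
  obtain B where B: "B \<subseteq> A" "finite B" "\<forall>a\<in>A. \<exists>b\<in>B. \<forall>v\<in>\<phi> ` S. mult_of \<phi> b v \<le> mult_of \<phi> a v"
    using dickson[OF finS, of A "mult_of \<phi>"] by blast
  have Bne: "B \<noteq> {}" using B(3) Ane by blast
  define X where "X = (\<lambda>b. \<phi> \<circ> b) ` B"
  have XR: "X \<subseteq> realinf" unfolding X_def using B(1) comp_realinf[OF h] unfolding A_def by blast
  have finX: "finite X" "X \<noteq> {}" unfolding X_def using B(2) Bne by auto
  have "phi_t \<phi> t \<alpha> = Min (tnorm t ` X)" if t: "t \<in> I" for t
  proof -
    let ?Q = "{tnorm t (\<phi> \<circ> a) | a. a \<in> fin_seqs S \<and> tauG a = \<alpha>}"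
    have tpos: "t > 0" using Ipos t by auto
    have eq: "phi_t \<phi> t \<alpha> = Inf ?Q" using rep t unfolding replaces_unif_def replaces_at_def by blast
    have Qne: "?Q \<noteq> {}" using Ane unfolding A_def by blast
    have finT: "finite (tnorm t ` X)" "tnorm t ` X \<noteq> {}" using finX by auto
    have "Min (tnorm t ` X) \<le> Inf ?Q"
    proof (rule cInf_greatest[OF Qne])
      fix y assume "y \<in> ?Q"
      then obtain a where a: "a \<in> A" "y = tnorm t (\<phi> \<circ> a)" unfolding A_def by blast
      then obtain b where b: "b \<in> B" "\<forall>v\<in>\<phi> ` S. mult_of \<phi> b v \<le> mult_of \<phi> a v" using B(3) by blast
      have bA: "b \<in> fin_seqs S" using b(1) B(1) unfolding A_def by blast
      have aA: "a \<in> fin_seqs S" using a(1) unfolding A_def by blast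
      have "tnorm t (\<phi> \<circ> b) \<le> y" using tnorm_mono_mult[OF h finS tpos aA bA b(2)] a(2) by simp
      moreover have "Min (tnorm t ` X) \<le> tnorm t (\<phi> \<circ> b)"
        using finT(1) b(1) unfolding X_def by (intro Min_le) auto
      ultimately show "Min (tnorm t ` X) \<le> y" by linarith
    qed
    moreover have "Inf ?Q \<le> Min (tnorm t ` X)"
    proof -
      have "Min (tnorm t ` X) \<in> tnorm t ` X" using finT by (rule Min_in)
      then obtain b where b: "b \<in> B" "Min (tnorm t ` X) = tnorm t (\<phi> \<circ> b)" unfolding X_def by auto
      have "Min (tnorm t ` X) \<in> ?Q" using b B(1) unfolding A_def by blast
      then show ?thesis by (rule cInf_lower[OF _ bdd_below_tn])
    qed
    ultimately show ?thesis using eq by linarith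
  qed
  then show ?thesis using finX XR by blast
qed

lemma tnorm_ident_fin:
  assumes "x \<in> realinf" "y \<in> realinf" "\<not> (\<forall>s>0. tnorm s x = tnorm s y)"
  shows "finite {t. t > 0 \<and> tnorm t x = tnorm t y}"
  using tnorm_ident assms by blast

lemma i_to_ii:
  assumes Ipos: "I \<subseteq> {0<..}" and opI: "open I"
    and X: "finite X" "X \<noteq> {}" "X \<subseteq> realinf"
    and fX: "\<forall>t\<in>I. phi_t \<phi> t \<alpha> = Min (tnorm t ` X)"
  shows "finite {t \<in> I. exceptional_pt \<phi> \<alpha> I t}"
proof -
  define E where "E = (\<Union>x\<in>X. \<Union>y\<in>X. if (\<forall>s>0. tnorm s x = tnorm s y) then {} else {t. t > 0 \<and> tnorm t x = tnorm t y})"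
  have finE: "finite E" unfolding E_def using X tnorm_ident_fin by (auto simp: subset_eq)
  have "{t \<in> I. exceptional_pt \<phi> \<alpha> I t} \<subseteq> E"
  proof
    fix t assume "t \<in> {t \<in> I. exceptional_pt \<phi> \<alpha> I t}"
    then have tI: "t \<in> I" and nst: "\<not> standard_pt \<phi> \<alpha> I t" unfolding exceptional_pt_def by auto
    have tpos: "t > 0" using tI Ipos by auto
    show "t \<in> E"
    proof (rule ccontr)
      assume tE: "t \<notin> E"
      have finT: "finite (tnorm t ` X)" "tnorm t ` X \<noteq> {}" using X by auto
      obtain x where x: "x \<in> X" "tnorm t x = Min (tnorm t ` X)"
        using Min_in[OF finT] by auto
      define Y where "Y = {y\<in>X. \<not> (\<forall>s>0. tnorm s y = tnorm s x)}"
      have finY: "finite Y" using X unfolding Y_def by simp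
      have gt: "tnorm t x < tnorm t y" if y: "y \<in> Y" for y
      proof -
        have yX: "y \<in> X" and ny: "\<not> (\<forall>s>0. tnorm s y = tnorm s x)" using y unfolding Y_def by auto
        have "\<not> (\<forall>s>0. tnorm s x = tnorm s y)" using ny by auto
        then have "tnorm t x \<noteq> tnorm t y" using tE x(1) yX tpos unfolding E_def by auto
        moreover have "tnorm t x \<le> tnorm t y" using x(2) Min_le[OF finT(1)] yX by simp
        ultimately show ?thesis by simp
      qed
      have ev: "\<forall>y\<in>Y. eventually (\<lambda>s. 0 < tnorm s y - tnorm s x) (at t)"
      proof
        fix y assume y: "y \<in> Y"
        have "y \<in> realinf" "x \<in> realinf" using y x(1) X(3) unfolding Y_def by auto
        then have "((\<lambda>s. tnorm s y - tnorm s x) \<longlongrightarrow> tnorm t y - tnorm t x) (at t)"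
          using tnorm_cont tpos isCont_def by (intro tendsto_diff) blast+
        moreover have "0 < tnorm t y - tnorm t x" using gt[OF y] by simp
        ultimately show "eventually (\<lambda>s. 0 < tnorm s y - tnorm s x) (at t)"
          by (rule order_tendstoD(1))
      qed
      have "eventually (\<lambda>s. \<forall>y\<in>Y. 0 < tnorm s y - tnorm s x) (at t)"
        by (rule eventually_ball_finite[OF finY ev])
      then obtain d where d: "d > 0" "\<forall>s. s \<noteq> t \<and> dist s t < d \<longrightarrow> (\<forall>y\<in>Y. 0 < tnorm s y - tnorm s x)"
        unfolding eventually_at by auto
      obtain e where e: "e > 0" "ball t e \<subseteq> I" using open_contains_ball_eq[OF opI] tI by blast
      define \<delta> where "\<delta> = min d e"
      have sub: "{t - \<delta><..<t + \<delta>} \<subseteq> I"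
      proof
        fix s assume "s \<in> {t - \<delta><..<t + \<delta>}"
        then have "dist s t < e" unfolding \<delta>_def dist_real_def by auto
        then show "s \<in> I" using e(2) by (auto simp: dist_commute)
      qed
      have unif: "\<forall>s\<in>{t - \<delta><..<t + \<delta>}. phi_t \<phi> s \<alpha> = tnorm s x"
      proof
        fix s assume s: "s \<in> {t - \<delta><..<t + \<delta>}"
        then have sI: "s \<in> I" using sub by blast
        have spos: "s > 0" using sI Ipos by auto
        have "Min (tnorm s ` X) = tnorm s x"
        proof (rule Min_eqI)
          show "finite (tnorm s ` X)" using X by simp
          show "tnorm s x \<in> tnorm s ` X" using x(1) by simp
          fix z assume "z \<in> tnorm s ` X"
          then obtain y where y: "y \<in> X" "z = tnorm s y" by auto
          show "tnorm s x \<le> z"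
          proof (cases "y \<in> Y")
            case True
            show ?thesis
            proof (cases "s = t")
              case True
              then show ?thesis using gt \<open>y \<in> Y\<close> y by (simp add: less_imp_le)
            next
              case False
              have "dist s t < d" using s unfolding \<delta>_def dist_real_def by auto
              then have "0 < tnorm s y - tnorm s x" using d(2) False \<open>y \<in> Y\<close> by blast
              then show ?thesis using y by simp
            qed
          next
            case False
            then have "\<forall>s>0. tnorm s y = tnorm s x" using y unfolding Y_def by auto
            then show ?thesis using y spos by simp
          qed
        qed
        then show "phi_t \<phi> s \<alpha> = tnorm s x" using fX sI by simp
      qed
      have "x \<in> realinf" using x(1) X(3) by auto
      then have "uniform_set \<phi> \<alpha> {t - \<delta><..<t + \<delta>}" unfolding uniform_set_def using unif by blast
      moreover have "t \<in> {t - \<delta><..<t + \<delta>}" using d e unfolding \<delta>_def by simp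
      ultimately have "standard_pt \<phi> \<alpha> I t" unfolding standard_pt_def using tI sub by blast
      then show False using nst by simp
    qed
  qed
  then show ?thesis using finE finite_subset by blast
qed



lemma infinite_open_ivl: "p < q \<Longrightarrow> infinite {p<..<(q::real)}"
  using uncountable_open_interval countable_finite by blast

lemma germs_finite:
  fixes f :: "real \<Rightarrow> real" and H :: "(real \<Rightarrow> real) set"
  assumes Ipos: "I \<subseteq> {0<..}" and ivl: "is_interval I" and finF: "finite F"
    and ident: "\<forall>h1\<in>H. \<forall>h2\<in>H. infinite {t. t > 0 \<and> h1 t = h2 t} \<longrightarrow> h1 = h2"
    and std: "\<forall>t\<in>I. t \<notin> F \<longrightarrow> (\<exists>p q. \<exists>h\<in>H. t \<in> {p<..<q} \<and> {p<..<q} \<subseteq> I \<and> (\<forall>s\<in>{p<..<q}. f s = h s))"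
  shows "finite {h\<in>H. \<exists>p q. p < q \<and> {p<..<q} \<subseteq> I \<and> (\<forall>s\<in>{p<..<q}. f s = h s)}"
proof -
  define G where "G = {h\<in>H. \<exists>p q. p < q \<and> {p<..<q} \<subseteq> I \<and> (\<forall>s\<in>{p<..<q}. f s = h s)}"
  have "\<forall>g\<in>G. \<exists>pq. fst pq < snd pq \<and> {fst pq<..<snd pq} \<subseteq> I \<and> (\<forall>s\<in>{fst pq<..<snd pq}. f s = g s)"
    unfolding G_def by force
  then obtain PQ where PQ: "\<forall>g\<in>G. fst (PQ g) < snd (PQ g) \<and> {fst (PQ g)<..<snd (PQ g)} \<subseteq> I \<and>
      (\<forall>s\<in>{fst (PQ g)<..<snd (PQ g)}. f s = g s)"
    by metis
  define P where "P g = fst (PQ g)" for g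
  define Q where "Q g = snd (PQ g)" for g
  define c where "c g = (P g + Q g) / 2" for g
  define A where "A g = {u. c g < u \<and> {c g..<u} \<subseteq> I \<and> (\<forall>v\<in>{c g..<u}. f v = g v)}" for g
  define \<sigma> where "\<sigma> g = (if bdd_above (A g) then Some (Sup (A g)) else None)" for g
  have PQ': "P g < Q g" "{P g<..<Q g} \<subseteq> I" "\<forall>s\<in>{P g<..<Q g}. f s = g s" if "g \<in> G" for g
    using PQ that unfolding P_def Q_def by auto
  have cPQ: "P g < c g" "c g < Q g" if "g \<in> G" for g
    using PQ'(1)[OF that] unfolding c_def by auto
  have QA: "Q g \<in> A g" if g: "g \<in> G" for g
  proof -
    have "{c g..<Q g} \<subseteq> {P g<..<Q g}" using cPQ[OF g] by auto
    then show ?thesis unfolding A_def using cPQ[OF g] PQ'[OF g] by blast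
  qed
  have cI: "c g \<in> I" if "g \<in> G" for g using PQ'(2)[OF that] cPQ[OF that] by auto
  have GH: "G \<subseteq> H" unfolding G_def by auto
  have overlap: "g1 = g2" if g: "g1 \<in> G" "g2 \<in> G" and u: "u1 \<in> A g1" "u2 \<in> A g2"
      and m: "c g1 \<le> m" "c g2 \<le> m" "m < u1" "m < u2" for g1 g2 u1 u2 m
  proof -
    have "{m<..<min u1 u2} \<subseteq> {t. t > 0 \<and> g1 t = g2 t}"
    proof
      fix v assume v: "v \<in> {m<..<min u1 u2}"
      then have v1: "v \<in> {c g1..<u1}" and v2: "v \<in> {c g2..<u2}" using m by auto
      have "v \<in> I" "f v = g1 v" using u(1) v1 unfolding A_def by auto
      moreover have "f v = g2 v" using u(2) v2 unfolding A_def by auto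
      ultimately show "v \<in> {t. t > 0 \<and> g1 t = g2 t}" using Ipos by auto
    qed
    moreover have "infinite {m<..<min u1 u2}" using m by (intro infinite_open_ivl) simp
    ultimately have "infinite {t. t > 0 \<and> g1 t = g2 t}" using finite_subset by blast
    then show ?thesis using ident g GH by blast
  qed
  have inj: "inj_on \<sigma> G"
  proof (rule inj_onI)
    fix g1 g2 assume g: "g1 \<in> G" "g2 \<in> G" and eq: "\<sigma> g1 = \<sigma> g2"
    define m where "m = max (c g1) (c g2)"
    have ex: "\<exists>u\<in>A g1. m < u" "\<exists>u\<in>A g2. m < u"
    proof -
      have "\<exists>u\<in>A g1. m < u \<and> (\<exists>u\<in>A g2. m < u)"
      proof (cases "bdd_above (A g1)")
        case True
        then have b2: "bdd_above (A g2)" using eq unfolding \<sigma>_def by (auto split: if_splits)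
        have s: "Sup (A g1) = Sup (A g2)" using eq True b2 unfolding \<sigma>_def by simp
        have ne1: "A g1 \<noteq> {}" and ne2: "A g2 \<noteq> {}" using QA g by auto
        have "c g1 < Sup (A g1)" using cPQ(2)[OF g(1)] cSup_upper[OF QA[OF g(1)] True] by linarith
        moreover have "c g2 < Sup (A g2)" using cPQ(2)[OF g(2)] cSup_upper[OF QA[OF g(2)] b2] by linarith
        ultimately have "m < Sup (A g1)" "m < Sup (A g2)" using s unfolding m_def by auto
        then show ?thesis using less_cSup_iff[OF ne1 True] less_cSup_iff[OF ne2 b2] by blast
      next
        case False
        then have b2: "\<not> bdd_above (A g2)" using eq unfolding \<sigma>_def by (auto split: if_splits)
        have "\<exists>u\<in>A g1. m < u" using False unfolding bdd_above_def by (meson not_le)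
        moreover have "\<exists>u\<in>A g2. m < u" using b2 unfolding bdd_above_def by (meson not_le)
        ultimately show ?thesis by blast
      qed
      then show "\<exists>u\<in>A g1. m < u" "\<exists>u\<in>A g2. m < u" by blast+
    qed
    then obtain u1 u2 where uu: "u1 \<in> A g1" "m < u1" "u2 \<in> A g2" "m < u2" by blast
    show "g1 = g2" by (rule overlap[OF g uu(1) uu(3), of m]) (use uu in \<open>auto simp: m_def\<close>)
  qed
  have img: "\<sigma> ` G \<subseteq> insert None (insert (Some (Sup I)) (Some ` F))"
  proof
    fix y assume "y \<in> \<sigma> ` G"
    then obtain g where g: "g \<in> G" "y = \<sigma> g" by blast
    show "y \<in> insert None (insert (Some (Sup I)) (Some ` F))"
    proof (cases "bdd_above (A g)")
      case False
      then show ?thesis using g unfolding \<sigma>_def by simp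
    next
      case True
      define s where "s = Sup (A g)"
      have ys: "y = Some s" using g True unfolding \<sigma>_def s_def by simp
      have neA: "A g \<noteq> {}" using QA[OF g(1)] by auto
      have uls: "u \<le> s" if "u \<in> A g" for u using cSup_upper[OF that True] unfolding s_def .
      have cs: "c g < s" using uls[OF QA[OF g(1)]] cPQ(2)[OF g(1)] by linarith
      show ?thesis
      proof (cases "s \<in> I")
        case True
        have "s \<in> F"
        proof (rule ccontr)
          assume "s \<notin> F"
          then obtain p' q' h where h: "h \<in> H" "s \<in> {p'<..<q'}" "{p'<..<q'} \<subseteq> I" "\<forall>v\<in>{p'<..<q'}. f v = h v"
            using std True by blast
          define m where "m = max p' (c g)"
          have "m < s" using h(2) cs unfolding m_def by auto
          then obtain u where u: "u \<in> A g" "m < u"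
            using less_cSup_iff[OF neA \<open>bdd_above (A g)\<close>] unfolding s_def by blast
          have "{m<..<min u s} \<subseteq> {t. t > 0 \<and> g t = h t}"
          proof
            fix v assume v: "v \<in> {m<..<min u s}"
            then have v1: "v \<in> {c g..<u}" unfolding m_def by auto
            have v2: "v \<in> {p'<..<q'}" using v h(2) unfolding m_def by auto
            have "v \<in> I" "f v = g v" using u(1) v1 unfolding A_def by auto
            moreover have "f v = h v" using h(4) v2 by blast
            ultimately show "v \<in> {t. t > 0 \<and> g t = h t}" using Ipos by auto
          qed
          moreover have "infinite {m<..<min u s}" using \<open>m < s\<close> u(2) by (intro infinite_open_ivl) simp
          ultimately have "infinite {t. t > 0 \<and> g t = h t}" using finite_subset by blast
          then have gh: "g = h" using ident g(1) GH h(1) by blast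
          have "q' \<in> A g"
          proof -
            have "c g < q'" using cs h(2) by auto
            moreover have "v \<in> I \<and> f v = g v" if v: "v \<in> {c g..<q'}" for v
            proof (cases "v < u")
              case True
              then show ?thesis using u(1) v unfolding A_def by auto
            next
              case False
              then have "v \<in> {p'<..<q'}" using v u(2) unfolding m_def by auto
              then show ?thesis using h(3,4) gh by auto
            qed
            ultimately show ?thesis unfolding A_def by blast
          qed
          then have "q' \<le> s" by (rule uls)
          then show False using h(2) by simp
        qed
        then show ?thesis using ys by simp
      next
        case False
        have ub: "w \<le> s" if w: "w \<in> I" for w
        proof (rule ccontr)
          assume "\<not> w \<le> s"
          then have "c g \<le> s" "s \<le> w" using cs by auto
          then have "s \<in> I" using ivl cI[OF g(1)] w unfolding is_interval_1 by blast
          then show False using False by simp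
        qed
        have neI: "I \<noteq> {}" using cI[OF g(1)] by auto
        have bI: "bdd_above I" unfolding bdd_above_def using ub by blast
        have "Sup I \<le> s" using ub by (intro cSup_least[OF neI]) auto
        moreover have "s \<le> Sup I"
          unfolding s_def
        proof (rule cSup_least[OF neA])
          fix u assume u: "u \<in> A g"
          show "u \<le> Sup I"
          proof (rule dense_le_bounded[of "c g" u])
            show "c g < u" using u unfolding A_def by simp
            fix w assume "c g < w" "w < u"
            then have "w \<in> I" using u unfolding A_def by auto
            then show "w \<le> Sup I" using bI by (rule cSup_upper)
          qed
        qed
        ultimately have "s = Sup I" by simp
        then show ?thesis using ys by simp
      qed
    qed
  qed
  have "finite (\<sigma> ` G)" using finite_subset[OF img] finF by simp
  then show ?thesis using inj finite_imageD unfolding G_def by blast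
qed



definition sb :: "(nat \<Rightarrow> 'a::zero) \<Rightarrow> nat" where
  "sb a = (if {n. a n \<noteq> 0} = {} then 0 else Suc (Max {n. a n \<noteq> 0}))"

lemma fin_seq_zero_beyond:
  assumes fin: "finite {n. a n \<noteq> 0}" and n: "sb a \<le> n"
  shows "a n = 0"
proof (cases "{n. a n \<noteq> 0} = {}")
  case True then show ?thesis by auto
next
  case False
  have "sb a = Suc (Max {n. a n \<noteq> 0})" unfolding sb_def by (simp only: False if_False)
  then have "Max {n. a n \<noteq> 0} < n" using n by simp
  then show ?thesis using Max_ge[OF fin, of n] by (metis mem_Collect_eq not_le)
qed

lemma countable_fin_seqs: "countable (fin_seqs (UNIV :: 'a::{zero,countable} set))"
proof -
  define enc where "enc a = map a [0..<sb a]" for a :: "nat \<Rightarrow> 'a"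
  have "inj_on enc (fin_seqs UNIV)"
  proof (rule inj_onI)
    fix a b assume a: "a \<in> fin_seqs UNIV" and b: "b \<in> fin_seqs UNIV" and eq: "enc a = enc b"
    have fa: "finite {n. a n \<noteq> 0}" and fb: "finite {n. b n \<noteq> 0}" using a b unfolding fin_seqs_def by auto
    have "length (enc a) = length (enc b)" using eq by simp
    then have len: "sb a = sb b" unfolding enc_def by simp
    show "a = b"
    proof
      fix n
      show "a n = b n"
      proof (cases "n < sb a")
        case True
        have "enc a ! n = enc b ! n" using eq by simp
        then show ?thesis using True len unfolding enc_def by simp
      next
        case False
        then have n1: "sb a \<le> n" and n2: "sb b \<le> n" using len by auto
        show ?thesis using fin_seq_zero_beyond[OF fa n1] fin_seq_zero_beyond[OF fb n2] by simp
      qed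
    qed
  qed
  moreover have "countable (enc ` fin_seqs UNIV)" by simp
  ultimately show ?thesis using countable_image_inj_on by blast
qed

lemma K1:
  fixes \<phi> :: "'a::{ab_group_add,countable} \<Rightarrow> real"
  assumes h: "height \<phi>" and unc: "uncountable U" and Upos: "U \<subseteq> {0<..}"
    and att: "\<forall>t\<in>U. attained \<phi> t \<alpha>" and x: "x \<in> realinf"
    and eqx: "\<forall>t\<in>U. phi_t \<phi> t \<alpha> = tnorm t x"
  shows "\<exists>a\<in>fin_seqs UNIV. tauG a = \<alpha> \<and> (\<forall>s>0. tnorm s (\<phi> \<circ> a) = tnorm s x)"
proof -
  obtain At where At: "\<forall>t\<in>U. At t \<in> fin_seqs UNIV \<and> tauG (At t) = \<alpha> \<and> tnorm t (\<phi> \<circ> At t) = phi_t \<phi> t \<alpha>"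
    using att unfolding attained_def by metis
  have cimg: "countable (At ` U)"
    using countable_subset[OF _ countable_fin_seqs] At by blast
  have "\<exists>a\<in>At ` U. infinite {t\<in>U. At t = a}"
  proof (rule ccontr)
    assume "\<not> ?thesis"
    then have "\<forall>a\<in>At ` U. countable {t\<in>U. At t = a}" using countable_finite by blast
    then have "countable (\<Union>a\<in>At ` U. {t\<in>U. At t = a})" using cimg by blast
    moreover have "(\<Union>a\<in>At ` U. {t\<in>U. At t = a}) = U" by blast
    ultimately show False using unc by simp
  qed
  then obtain a where a: "a \<in> At ` U" "infinite {t\<in>U. At t = a}" by blast
  have aF: "a \<in> fin_seqs UNIV" "tauG a = \<alpha>" using a(1) At by auto
  have "{t\<in>U. At t = a} \<subseteq> {t. t > 0 \<and> tnorm t (\<phi> \<circ> a) = tnorm t x}"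
    using At eqx Upos by auto
  then have "infinite {t. t > 0 \<and> tnorm t (\<phi> \<circ> a) = tnorm t x}" using a(2) finite_subset by blast
  then have "\<forall>s>0. tnorm s (\<phi> \<circ> a) = tnorm s x"
    using tnorm_ident[OF comp_realinf[OF h aF(1)] x] by blast
  then show ?thesis using aF by blast
qed

lemma range_finite_seq:
  assumes "a \<in> fin_seqs S"
  shows "finite (range a)"
proof -
  have "range a \<subseteq> insert 0 (a ` {n. a n \<noteq> 0})" by auto
  moreover have "finite {n. a n \<noteq> 0}" using assms unfolding fin_seqs_def by simp
  ultimately show ?thesis using finite_subset by blast
qed

lemma fin_seqs_range:
  assumes "a \<in> fin_seqs S" "range a \<subseteq> R"
  shows "a \<in> fin_seqs R"
  using assms unfolding fin_seqs_def by auto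

definition germ :: "(nat \<Rightarrow> real) \<Rightarrow> real \<Rightarrow> real" where
  "germ x = (\<lambda>s. if 0 < s then tnorm s x else 0)"

lemma ii_to_iii:
  fixes \<phi> :: "'a::{ab_group_add,countable} \<Rightarrow> real"
  assumes h: "height \<phi>" and ivl: "is_interval I" and Ipos: "I \<subseteq> {0<..}"
    and att: "\<forall>t\<in>I. attained \<phi> t \<alpha>"
    and finF: "finite {t \<in> I. exceptional_pt \<phi> \<alpha> I t}"
  shows "\<exists>R. finite R \<and> 0 \<in> R \<and> replaces_unif \<phi> \<alpha> R I"
proof -
  define F where "F = {t \<in> I. exceptional_pt \<phi> \<alpha> I t}"
  define f where "f t = phi_t \<phi> t \<alpha>" for t
  define H where "H = germ ` realinf"
  have ident: "\<forall>h1\<in>H. \<forall>h2\<in>H. infinite {t. t > 0 \<and> h1 t = h2 t} \<longrightarrow> h1 = h2"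
  proof (intro ballI impI)
    fix h1 h2 assume h1: "h1 \<in> H" and h2: "h2 \<in> H" and inf: "infinite {t. t > 0 \<and> h1 t = h2 t}"
    obtain x1 x2 where x: "x1 \<in> realinf" "x2 \<in> realinf" "h1 = germ x1" "h2 = germ x2"
      using h1 h2 unfolding H_def by blast
    have "{t. t > 0 \<and> h1 t = h2 t} = {t. t > 0 \<and> tnorm t x1 = tnorm t x2}"
      unfolding x germ_def by auto
    then have "infinite {t. t > 0 \<and> tnorm t x1 = tnorm t x2}" using inf by simp
    then have "\<forall>s>0. tnorm s x1 = tnorm s x2" by (rule tnorm_ident[OF x(1,2)])
    then show "h1 = h2" unfolding x germ_def by auto
  qed
  have std: "\<forall>t\<in>I. t \<notin> F \<longrightarrow> (\<exists>p q. \<exists>h\<in>H. t \<in> {p<..<q} \<and> {p<..<q} \<subseteq> I \<and> (\<forall>s\<in>{p<..<q}. f s = h s))"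
  proof (intro ballI impI)
    fix t assume t: "t \<in> I" "t \<notin> F"
    then have "standard_pt \<phi> \<alpha> I t" unfolding F_def exceptional_pt_def by simp
    then obtain p q where pq0: "t \<in> {p<..<q}" "{p<..<q} \<subseteq> I" "uniform_set \<phi> \<alpha> {p<..<q}"
      unfolding standard_pt_def by blast
    then obtain x where x: "x \<in> realinf" "\<forall>s\<in>{p<..<q}. phi_t \<phi> s \<alpha> = tnorm s x"
      unfolding uniform_set_def by blast
    note pq = pq0(1,2) x
    have "\<forall>s\<in>{p<..<q}. f s = germ x s"
      using pq(2,4) Ipos unfolding f_def germ_def by auto
    moreover have "germ x \<in> H" using pq(3) unfolding H_def by simp
    ultimately show "\<exists>p q. \<exists>h\<in>H. t \<in> {p<..<q} \<and> {p<..<q} \<subseteq> I \<and> (\<forall>s\<in>{p<..<q}. f s = h s)"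
      using pq(1,2) by blast
  qed
  define G where "G = {h\<in>H. \<exists>p q. p < q \<and> {p<..<q} \<subseteq> I \<and> (\<forall>s\<in>{p<..<q}. f s = h s)}"
  have finG: "finite G" unfolding G_def
    using germs_finite[OF Ipos ivl finF[folded F_def] ident std] .
  define G' where "G' = {\<gamma>\<in>G. \<exists>a. a \<in> fin_seqs UNIV \<and> tauG a = \<alpha> \<and> germ (\<phi> \<circ> a) = \<gamma>}"
  have "\<forall>\<gamma>\<in>G'. \<exists>a. a \<in> fin_seqs UNIV \<and> tauG a = \<alpha> \<and> germ (\<phi> \<circ> a) = \<gamma>"
    unfolding G'_def by blast
  from bchoice[OF this] obtain rep where
    rep: "\<forall>\<gamma>\<in>G'. rep \<gamma> \<in> fin_seqs UNIV \<and> tauG (rep \<gamma>) = \<alpha> \<and> germ (\<phi> \<circ> rep \<gamma>) = \<gamma>"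
    by blast
  have "\<forall>t\<in>I. \<exists>a. a \<in> fin_seqs UNIV \<and> tauG a = \<alpha> \<and> tnorm t (\<phi> \<circ> a) = phi_t \<phi> t \<alpha>"
    using att unfolding attained_def by blast
  from bchoice[OF this] obtain At where
    At: "\<forall>t\<in>I. At t \<in> fin_seqs UNIV \<and> tauG (At t) = \<alpha> \<and> tnorm t (\<phi> \<circ> At t) = phi_t \<phi> t \<alpha>"
    by blast
  define R where "R = insert 0 ((\<Union>\<gamma>\<in>G'. range (rep \<gamma>)) \<union> (\<Union>t\<in>F. range (At t)))"
  have finR: "finite R"
  proof -
    have "finite G'" using finG unfolding G'_def by simp
    moreover have "finite (range (rep \<gamma>))" if "\<gamma> \<in> G'" for \<gamma>
      using rep that range_finite_seq by blast
    moreover have "finite F" using finF unfolding F_def .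
    moreover have "finite (range (At t))" if "t \<in> F" for t
      using At that range_finite_seq unfolding F_def by blast
    ultimately show ?thesis unfolding R_def by auto
  qed
  have "replaces_at \<phi> \<alpha> R t" if t: "t \<in> I" for t
  proof (cases "t \<in> F")
    case True
    have "At t \<in> fin_seqs R"
      by (rule fin_seqs_range[of _ UNIV]) (use At t True in \<open>auto simp: R_def\<close>)
    then show ?thesis using At t by (intro replaces_atI[of R "At t"]) (auto simp: R_def)
  next
    case False
    then have "standard_pt \<phi> \<alpha> I t" using t unfolding F_def exceptional_pt_def by auto
    then obtain p q where pq0: "t \<in> {p<..<q}" "{p<..<q} \<subseteq> I" "uniform_set \<phi> \<alpha> {p<..<q}"
      unfolding standard_pt_def by blast
    then obtain x where x: "x \<in> realinf" "\<forall>s\<in>{p<..<q}. phi_t \<phi> s \<alpha> = tnorm s x"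
      unfolding uniform_set_def by blast
    note pq = pq0(1,2) x
    have "uncountable {p<..<q}" using pq(1) uncountable_open_interval by auto
    moreover have "{p<..<q} \<subseteq> {0<..}" using pq(2) Ipos by blast
    moreover have "\<forall>s\<in>{p<..<q}. attained \<phi> s \<alpha>" using pq(2) att by blast
    ultimately have "\<exists>a\<in>fin_seqs UNIV. tauG a = \<alpha> \<and> (\<forall>s>0. tnorm s (\<phi> \<circ> a) = tnorm s x)"
      using K1[OF h _ _ _ pq(3) pq(4)] by blast
    then obtain a where a: "a \<in> fin_seqs UNIV" "tauG a = \<alpha>" "\<forall>s>0. tnorm s (\<phi> \<circ> a) = tnorm s x"
      by blast
    have gx: "germ (\<phi> \<circ> a) = germ x" unfolding germ_def using a(3) by auto
    have "germ x \<in> G"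
    proof -
      have "germ x \<in> H" using pq(3) unfolding H_def by simp
      moreover have "\<forall>s\<in>{p<..<q}. f s = germ x s"
        using pq(2,4) Ipos unfolding f_def germ_def by auto
      moreover have "p < q" using pq(1) by simp
      ultimately show ?thesis unfolding G_def using pq(2) by blast
    qed
    then have gG': "germ x \<in> G'" unfolding G'_def using a(1,2) gx by blast
    define b where "b = rep (germ x)"
    have b: "b \<in> fin_seqs UNIV" "tauG b = \<alpha>" "germ (\<phi> \<circ> b) = germ x"
      using rep gG' unfolding b_def by auto
    have tpos: "t > 0" using t Ipos by auto
    have "tnorm t (\<phi> \<circ> b) = tnorm t x"
      using fun_cong[OF b(3), of t] tpos unfolding germ_def by simp
    also have "\<dots> = phi_t \<phi> t \<alpha>" using pq(1,4) by simp
    finally have bt: "tnorm t (\<phi> \<circ> b) = phi_t \<phi> t \<alpha>" .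
    have "b \<in> fin_seqs R"
      by (rule fin_seqs_range[OF b(1)]) (use gG' in \<open>auto simp: R_def b_def\<close>)
    then show ?thesis by (intro replaces_atI[of R b]) (use b(2) bt in \<open>auto simp: R_def\<close>)
  qed
  then show ?thesis using finR unfolding replaces_unif_def R_def by blast
qed


theorem theorem2p2:
  fixes \<phi> :: "'a::{ab_group_add, countable} \<Rightarrow> real"
    and \<alpha> :: 'a
    and I :: "real set"
  assumes "height \<phi>"
    and "open I" and "is_interval I" and "I \<subseteq> {0<..}"
    and "\<forall>t\<in>I. attained \<phi> t \<alpha>"
  shows "((\<exists>X. finite X \<and> X \<noteq> {} \<and> X \<subseteq> realinf \<and>
             (\<forall>t\<in>I. phi_t \<phi> t \<alpha> = Min (tnorm t ` X)))
          \<longleftrightarrow> finite {t \<in> I. exceptional_pt \<phi> \<alpha> I t})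
       \<and> (finite {t \<in> I. exceptional_pt \<phi> \<alpha> I t}
          \<longleftrightarrow> (\<exists>R. finite R \<and> 0 \<in> R \<and> replaces_unif \<phi> \<alpha> R I))
       \<and> ((\<exists>R. finite R \<and> 0 \<in> R \<and> replaces_unif \<phi> \<alpha> R I)
          \<longleftrightarrow> (\<exists>S. 0 \<in> S \<and> finite (\<phi> ` S) \<and> replaces_unif \<phi> \<alpha> S I))"
proof -
  let ?P1 = "\<exists>X. finite X \<and> X \<noteq> {} \<and> X \<subseteq> realinf \<and>
             (\<forall>t\<in>I. phi_t \<phi> t \<alpha> = Min (tnorm t ` X))"
  let ?P2 = "finite {t \<in> I. exceptional_pt \<phi> \<alpha> I t}"
  let ?P3 = "\<exists>R. finite R \<and> 0 \<in> R \<and> replaces_unif \<phi> \<alpha> R I"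
  let ?P4 = "\<exists>S. 0 \<in> S \<and> finite (\<phi> ` S) \<and> replaces_unif \<phi> \<alpha> S I"
  have 12: "?P1 \<Longrightarrow> ?P2"
  proof -
    assume ?P1
    then obtain X where X: "finite X" "X \<noteq> {}" "X \<subseteq> realinf"
      "\<forall>t\<in>I. phi_t \<phi> t \<alpha> = Min (tnorm t ` X)" by blast
    show ?P2 by (rule i_to_ii[OF assms(4) assms(2) X])
  qed
  have 23: "?P2 \<Longrightarrow> ?P3" using ii_to_iii[OF assms(1) assms(3) assms(4) assms(5)] by blast
  have 34: "?P3 \<Longrightarrow> ?P4"
  proof -
    assume ?P3
    then obtain R where "finite R" "0 \<in> R" "replaces_unif \<phi> \<alpha> R I" by blast
    then show ?P4 by (intro exI[of _ R]) simp
  qed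
  have 41: "?P4 \<Longrightarrow> ?P1"
  proof -
    assume ?P4
    then obtain S where S: "finite (\<phi> ` S)" "replaces_unif \<phi> \<alpha> S I" by blast
    show ?P1 by (rule iv_to_i[OF assms(1) assms(4) S])
  qed
  show ?thesis
  proof (intro conjI iffI)
    show "?P2" if "?P1" using 12 that .
    show "?P1" if "?P2" using 41[OF 34[OF 23[OF that]]] .
    show "?P3" if "?P2" using 23 that .
    show "?P2" if "?P3" using 12[OF 41[OF 34[OF that]]] .
    show "?P4" if "?P3" using 34 that .
    show "?P3" if "?P4" using 23[OF 12[OF 41[OF that]]] .
  qed
qed

end
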